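(* Let $X$ be a real Banach space, $0<\delta\le2$, and $D\subset X$ dense. Then $X$ has the LD$\delta$P if and only if for every $\varepsilon>0$ and every $z\in D$, either $\|z\|\ge1$ or $$z\in\overline{\mathrm{co}}_{\mathbb{Q}}\Big\{\tfrac{x+y}{2}: x,y\in \operatorname{int}(B_X)\cap D,\ \|x-y\|>\delta-\varepsilon\Big\}.$$
   Context: $X$ has the local diameter $\delta$ property (LD$\delta$P) if every slice $S(B_X,f,\alpha)=\{x\in B_X:f(x)>1-\alpha\}$ ($f\in S_{X^*}$, $\alpha>0$) has diameter $\ge\delta$. For $A\subset X$, $\overline{\mathrm{co}}_{\mathbb{Q}}(A)$ denotes the norm closure of the set of all convex combinations of elements of $A$ with rational coefficients. $\operatorname{int}(B_X)$ is the open unit ball. *)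

theory Defs
  imports "HOL-Analysis.Analysis"
begin

definition slice :: "('a::real_normed_vector \<Rightarrow> real) \<Rightarrow> real \<Rightarrow> 'a set" where
  "slice f \<alpha> = {x. norm x \<le> 1 \<and> f x > 1 - \<alpha>}"

definition LDP :: "real \<Rightarrow> 'a::real_normed_vector itself \<Rightarrow> bool" where
  "LDP \<delta> _ \<longleftrightarrow> (\<forall>(f::'a \<Rightarrow> real) \<alpha>. bounded_linear f \<and> onorm f = 1 \<and> \<alpha> > 0
      \<longrightarrow> diameter (slice f \<alpha>) \<ge> \<delta>)"

definition rat_convex_hull :: "'a::real_vector set \<Rightarrow> 'a set" where
  "rat_convex_hull A = {y. \<exists>I::nat set. \<exists>c x. finite I \<and> (\<forall>i\<in>I. c i \<in> \<rat> \<and> c i \<ge> 0 \<and> x i \<in> A)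
      \<and> sum c I = 1 \<and> y = (\<Sum>i\<in>I. c i *\<^sub>R x i)}"

definition closed_rat_convex_hull :: "'a::real_normed_vector set \<Rightarrow> 'a set" where
  "closed_rat_convex_hull A = closure (rat_convex_hull A)"

end

theory Submission
  imports Defs
begin

definition hbgood :: "('a::real_vector \<Rightarrow> real) \<Rightarrow> 'a \<Rightarrow> ('a \<times> real) set \<Rightarrow> bool" where
  "hbgood p x0 G \<longleftrightarrow> (\<forall>x a y b. (x,a)\<in>G \<longrightarrow> (y,b)\<in>G \<longrightarrow> (x+y,a+b)\<in>G)
     \<and> (\<forall>x a t. (x,a)\<in>G \<longrightarrow> (t*\<^sub>R x, t*a)\<in>G) \<and> (\<forall>x a. (x,a)\<in>G \<longrightarrow> a \<le> p x) \<and> (x0, p x0)\<in>G"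

lemma hbgoodD:
  assumes "hbgood p x0 G"
  shows "\<And>x a y b. (x,a)\<in>G \<Longrightarrow> (y,b)\<in>G \<Longrightarrow> (x+y,a+b)\<in>G"
    and "\<And>x a t. (x,a)\<in>G \<Longrightarrow> (t*\<^sub>R x, t*a)\<in>G"
    and "\<And>x a. (x,a)\<in>G \<Longrightarrow> a \<le> p x"
    and "(x0, p x0)\<in>G"
  using assms unfolding hbgood_def by simp_all

lemma hbgood_fun:
  assumes "hbgood p x0 G" "(x,a)\<in>G" "(x,b)\<in>G" and p0: "p 0 = 0"
  shows "a = b"
proof -
  have add: "\<And>x a y b. (x,a)\<in>G \<Longrightarrow> (y,b)\<in>G \<Longrightarrow> (x+y,a+b)\<in>G"
    and sc: "\<And>x a t. (x,a)\<in>G \<Longrightarrow> (t*\<^sub>R x, t*a)\<in>G"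
    and le: "\<And>x a. (x,a)\<in>G \<Longrightarrow> a \<le> p x" using assms(1) unfolding hbgood_def by blast+
  have "(x + (-1) *\<^sub>R x, a + (-1) * b) \<in> G" by (rule add[OF assms(2) sc[OF assms(3)]])
  hence 1: "(0, a - b) \<in> G" by simp
  have "(x + (-1) *\<^sub>R x, b + (-1) * a) \<in> G" by (rule add[OF assms(3) sc[OF assms(2)]])
  hence 2: "(0, b - a) \<in> G" by simp
  have "a - b \<le> 0" using le[OF 1] p0 by simp
  moreover have "b - a \<le> 0" using le[OF 2] p0 by simp
  ultimately show ?thesis by simp
qed

lemma hahn_banach_sublinear:
  fixes p :: "'a::real_vector \<Rightarrow> real"
  assumes sub: "\<And>x y. p (x + y) \<le> p x + p y"
    and hom: "\<And>x t. t > 0 \<Longrightarrow> p (t *\<^sub>R x) = t * p x"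
  shows "\<exists>f. linear f \<and> (\<forall>x. f x \<le> p x) \<and> f x0 = p x0"
proof -
  have p0: "p 0 = 0" using hom[of 2 0] by simp
  define A where "A = {G. hbgood p x0 G}"
  define G0 where "G0 = {(t *\<^sub>R x0, t * p x0) | t. True}"
  have G0A: "G0 \<in> A"
    unfolding A_def mem_Collect_eq hbgood_def
  proof (intro conjI allI impI)
    fix x a y b assume "(x, a) \<in> G0" "(y, b) \<in> G0"
    then obtain s t where "x = s *\<^sub>R x0" "a = s * p x0" "y = t *\<^sub>R x0" "b = t * p x0" unfolding G0_def by blast
    thus "(x + y, a + b) \<in> G0" unfolding G0_def
      by (auto intro!: exI[of _ "s + t"] simp: scaleR_add_left distrib_right)
  next
    fix x a t assume "(x, a) \<in> G0"
    then obtain s where "x = s *\<^sub>R x0" "a = s * p x0" unfolding G0_def by blast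
    thus "(t *\<^sub>R x, t * a) \<in> G0" unfolding G0_def
      by (auto intro!: exI[of _ "t * s"])
  next
    fix x a assume "(x, a) \<in> G0"
    then obtain s where xs: "x = s *\<^sub>R x0" "a = s * p x0" unfolding G0_def by blast
    show "a \<le> p x"
    proof (cases "s > 0")
      case True thus ?thesis using hom xs by simp
    next
      case False
      show ?thesis
      proof (cases "s = 0")
        case True thus ?thesis using xs p0 by simp
      next
        case False
        with \<open>\<not> s > 0\<close> have "-s > 0" by simp
        have "0 = p (s *\<^sub>R x0 + (-s) *\<^sub>R x0)" using p0 by (simp add: scaleR_left_diff_distrib)
        also have "\<dots> \<le> p (s *\<^sub>R x0) + p ((-s) *\<^sub>R x0)" by (rule sub)
        also have "\<dots> = p (s *\<^sub>R x0) + (-s) * p x0" using hom[OF \<open>-s > 0\<close>] by simp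
        finally show ?thesis using xs by simp
      qed
    qed
  next
    show "(x0, p x0) \<in> G0" unfolding G0_def by (auto intro!: exI[of _ 1])
  qed
  have "\<forall>C\<in>chains A. \<exists>U\<in>A. \<forall>X\<in>C. X \<subseteq> U"
  proof
    fix C assume C: "C \<in> chains A"
    show "\<exists>U\<in>A. \<forall>X\<in>C. X \<subseteq> U"
    proof (cases "C = {}")
      case True thus ?thesis using G0A by blast
    next
      case False
      have CA: "C \<subseteq> A" and ch: "\<And>X Y. X \<in> C \<Longrightarrow> Y \<in> C \<Longrightarrow> X \<subseteq> Y \<or> Y \<subseteq> X"
        using C unfolding chains_def chain_subset_def by blast+
      have "\<Union>C \<in> A" unfolding A_def mem_Collect_eq hbgood_def
      proof (intro conjI allI impI)
        fix x a y b assume "(x,a) \<in> \<Union>C" "(y,b) \<in> \<Union>C"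
        then obtain X Y where "X \<in> C" "Y \<in> C" "(x,a)\<in>X" "(y,b)\<in>Y" by blast
        moreover have "hbgood p x0 X" "hbgood p x0 Y" using CA \<open>X\<in>C\<close> \<open>Y\<in>C\<close> A_def by auto
        ultimately show "(x+y,a+b) \<in> \<Union>C" using ch[of X Y] hbgoodD(1)[of p x0 X x a y b] hbgoodD(1)[of p x0 Y x a y b]
          \<open>X \<in> C\<close> \<open>Y \<in> C\<close> by blast
      next
        fix x a t assume "(x,a) \<in> \<Union>C"
        then obtain X where "X \<in> C" "(x,a)\<in>X" by blast
        moreover have "hbgood p x0 X" using CA \<open>X\<in>C\<close> A_def by auto
        ultimately show "(t *\<^sub>R x, t*a) \<in> \<Union>C" using hbgoodD(2) by blast
      next
        fix x a assume "(x,a) \<in> \<Union>C"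
        then obtain X where "X \<in> C" "(x,a)\<in>X" by blast
        moreover have "hbgood p x0 X" using CA \<open>X\<in>C\<close> A_def by auto
        ultimately show "a \<le> p x" using hbgoodD(3) by blast
      next
        obtain X where "X \<in> C" using False by blast
        moreover have "hbgood p x0 X" using CA \<open>X\<in>C\<close> A_def by auto
        ultimately show "(x0, p x0) \<in> \<Union>C" using hbgoodD(4) by blast
      qed
      thus ?thesis by blast
    qed
  qed
  from Zorn_Lemma2[OF this] obtain M where MA: "M \<in> A" and Mmax: "\<forall>X\<in>A. M \<subseteq> X \<longrightarrow> X = M" by blast
  have Mg: "hbgood p x0 M" using MA A_def by simp
  have Madd: "\<And>x a y b. (x,a)\<in>M \<Longrightarrow> (y,b)\<in>M \<Longrightarrow> (x+y,a+b)\<in>M"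
    and Msc: "\<And>x a t. (x,a)\<in>M \<Longrightarrow> (t*\<^sub>R x, t*a)\<in>M"
    and Mle: "\<And>x a. (x,a)\<in>M \<Longrightarrow> a \<le> p x"
    and Mx0: "(x0, p x0) \<in> M" using hbgoodD[OF Mg] by blast+
  have Mfun: "\<And>x a b. (x,a)\<in>M \<Longrightarrow> (x,b)\<in>M \<Longrightarrow> a = b" using hbgood_fun[OF Mg _ _ p0] by blast
  have M00: "(0, 0) \<in> M" using Msc[OF Mx0, of 0] by simp
  have total: "\<exists>a. (y, a) \<in> M" for y
  proof (rule ccontr)
    assume ny: "\<nexists>a. (y, a) \<in> M"
    define S where "S = {a - p (x - y) | x a. (x,a)\<in>M}"
    define c where "c = Sup S"
    have Sne: "S \<noteq> {}" using M00 S_def by blast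
    have Sub: "s \<le> p (x' + y) - a'" if "s \<in> S" "(x',a')\<in>M" for s x' a'
    proof -
      obtain x a where s: "s = a - p (x - y)" "(x,a)\<in>M" using \<open>s\<in>S\<close> S_def by blast
      have "a + a' \<le> p (x + x')" using Mle[OF Madd[OF s(2) that(2)]] .
      also have "\<dots> = p ((x - y) + (x' + y))" by (simp add: algebra_simps)
      also have "\<dots> \<le> p (x - y) + p (x' + y)" by (rule sub)
      finally show ?thesis using s by simp
    qed
    have bdd: "bdd_above S" using Sub[OF _ M00] by (auto simp: bdd_above_def)
    have c1: "a - p (x - y) \<le> c" if "(x,a)\<in>M" for x a
      unfolding c_def using that bdd by (intro cSup_upper) (auto simp: S_def)
    have c2: "c \<le> p (x + y) - a" if "(x,a)\<in>M" for x a
      unfolding c_def using that Sne by (intro cSup_least) (auto intro: Sub)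
    define M' where "M' = {(x + t *\<^sub>R y, a + t * c) | x a t. (x,a)\<in>M}"
    have "hbgood p x0 M'" unfolding hbgood_def
    proof (intro conjI allI impI)
      fix x a x' b assume "(x,a) \<in> M'" "(x',b) \<in> M'"
      then obtain u s t u' s' t' where "x = u + t *\<^sub>R y" "a = s + t * c" "(u,s)\<in>M"
          "x' = u' + t' *\<^sub>R y" "b = s' + t' * c" "(u',s')\<in>M" unfolding M'_def by blast
      thus "(x + x', a + b) \<in> M'" unfolding M'_def
        by (intro CollectI exI[of _ "u+u'"] exI[of _ "s+s'"] exI[of _ "t+t'"])
          (auto simp: Madd algebra_simps)
    next
      fix x a r assume "(x,a) \<in> M'"
      then obtain u s t where "x = u + t *\<^sub>R y" "a = s + t * c" "(u,s)\<in>M" unfolding M'_def by blast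
      thus "(r *\<^sub>R x, r * a) \<in> M'" unfolding M'_def
        by (intro CollectI exI[of _ "r *\<^sub>R u"] exI[of _ "r * s"] exI[of _ "r * t"])
          (auto simp: Msc algebra_simps)
    next
      fix x a assume "(x,a) \<in> M'"
      then obtain u s t where xa: "x = u + t *\<^sub>R y" "a = s + t * c" "(u,s)\<in>M" unfolding M'_def by blast
      show "a \<le> p x"
      proof (cases "t > 0")
        case True
        have "(inverse t *\<^sub>R u, inverse t * s) \<in> M" using Msc[OF xa(3)] .
        from c2[OF this] have "c \<le> p (inverse t *\<^sub>R u + y) - inverse t * s" .
        also have "p (inverse t *\<^sub>R u + y) = inverse t * p (u + t *\<^sub>R y)"
        proof -
          have "inverse t *\<^sub>R u + y = inverse t *\<^sub>R (u + t *\<^sub>R y)" using True by (simp add: algebra_simps)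
          thus ?thesis using hom[of "inverse t"] True by simp
        qed
        finally have "t * c \<le> t * (inverse t * p (u + t *\<^sub>R y) - inverse t * s)"
          using True by (simp add: mult_left_mono)
        also have "\<dots> = p (u + t *\<^sub>R y) - s" using True by (simp add: algebra_simps)
        finally show ?thesis using xa by simp
      next
        case False
        show ?thesis
        proof (cases "t = 0")
          case True thus ?thesis using xa Mle by simp
        next
          case False
          with \<open>\<not> t > 0\<close> have tn: "-t > 0" by simp
          define r where "r = -t"
          have r: "r > 0" using tn r_def by simp
          have "(inverse r *\<^sub>R u, inverse r * s) \<in> M" using Msc[OF xa(3)] .
          from c1[OF this] have "inverse r * s - p (inverse r *\<^sub>R u - y) \<le> c" .
          also have "p (inverse r *\<^sub>R u - y) = inverse r * p (u + t *\<^sub>R y)"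
          proof -
            have "inverse r *\<^sub>R u - y = inverse r *\<^sub>R (u + t *\<^sub>R y)" using r r_def by (simp add: algebra_simps)
            thus ?thesis using hom[of "inverse r"] r by simp
          qed
          finally have "r * (inverse r * s - inverse r * p (u + t *\<^sub>R y)) \<le> r * c"
            using r by (simp add: mult_left_mono)
          moreover have "r * (inverse r * s - inverse r * p (u + t *\<^sub>R y)) = s - p (u + t *\<^sub>R y)"
            using r by (simp add: field_simps)
          ultimately have "s - p (u + t *\<^sub>R y) \<le> r * c" by simp
          thus ?thesis using xa r_def by simp
        qed
      qed
    next
      show "(x0, p x0) \<in> M'" unfolding M'_def using Mx0
        by (intro CollectI exI[of _ x0] exI[of _ "p x0"] exI[of _ 0]) auto
    qed
    hence "M' \<in> A" using A_def by simp
    moreover have "M \<subseteq> M'"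
    proof clarify
      fix x a assume "(x,a)\<in>M"
      thus "(x,a)\<in>M'" unfolding M'_def by (intro CollectI exI[of _ x] exI[of _ a] exI[of _ 0]) simp
    qed
    ultimately have "M' = M" using Mmax by blast
    moreover have "(y, c) \<in> M'" unfolding M'_def using M00
      by (intro CollectI exI[of _ 0] exI[of _ 0] exI[of _ 1]) auto
    ultimately show False using ny by blast
  qed
  define f where "f y = (SOME a. (y, a) \<in> M)" for y
  have fM: "(y, f y) \<in> M" for y unfolding f_def using total[of y] by (rule someI_ex)
  have "linear f"
  proof (rule linearI)
    fix x y show "f (x + y) = f x + f y" using Mfun[OF fM Madd[OF fM fM]] .
  next
    fix r x show "f (r *\<^sub>R x) = r *\<^sub>R f x" using Mfun[OF fM Msc[OF fM]] by simp
  qed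
  moreover have "\<forall>x. f x \<le> p x" using Mle[OF fM] by blast
  moreover have "f x0 = p x0" using Mfun[OF fM Mx0] .
  ultimately show ?thesis by blast
qed

lemma separation_point:
  fixes K :: "'a::real_normed_vector set"
  assumes nontriv: "\<exists>v::'a. v \<noteq> 0" and cK: "convex K" and zK: "z \<notin> closure K"
  shows "\<exists>g::'a \<Rightarrow> real. bounded_linear g \<and> onorm g = 1 \<and> (\<forall>k\<in>K. g k \<le> g z)"
proof -
  obtain r where r: "r > 0" and rK: "\<And>k. k \<in> K \<Longrightarrow> r \<le> dist z k"
    using zK unfolding closure_approachable by (force simp: dist_commute not_less)
  define Cone where "Cone = insert 0 {s *\<^sub>R (k - z) | s k. s \<ge> 0 \<and> k \<in> K}"
  define p where "p x = infdist x Cone" for x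
  have C0: "0 \<in> Cone" unfolding Cone_def by simp
  have Cne: "Cone \<noteq> {}" using C0 by blast
  have Csc: "t *\<^sub>R a \<in> Cone" if "a \<in> Cone" "t \<ge> 0" for a t
  proof -
    consider "a = 0" | s k where "a = s *\<^sub>R (k - z)" "s \<ge> 0" "k \<in> K" using \<open>a\<in>Cone\<close> Cone_def by blast
    thus ?thesis
    proof cases
      case 1 thus ?thesis using C0 by simp
    next
      case 2 thus ?thesis unfolding Cone_def using \<open>t\<ge>0\<close>
        by (intro insertI2 CollectI exI[of _ "t * s"] exI[of _ k]) simp
    qed
  qed
  have Cadd: "a + b \<in> Cone" if "a \<in> Cone" "b \<in> Cone" for a b
  proof -
    consider "a = 0" | s k where "a = s *\<^sub>R (k - z)" "s \<ge> 0" "k \<in> K" using \<open>a\<in>Cone\<close> Cone_def by blast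
    thus ?thesis
    proof cases
      case 1 thus ?thesis using that by simp
    next
      case A: 2
      consider "b = 0" | s' k' where "b = s' *\<^sub>R (k' - z)" "s' \<ge> 0" "k' \<in> K" using \<open>b\<in>Cone\<close> Cone_def by blast
      thus ?thesis
      proof cases
        case 1 thus ?thesis using that by simp
      next
        case B: 2
        show ?thesis
        proof (cases "s + s' = 0")
          case True
          hence "s = 0" "s' = 0" using A B by linarith+
          thus ?thesis using A B C0 by simp
        next
          case False
          hence pos: "s + s' > 0" using A B by linarith
          define k'' where "k'' = (s / (s + s')) *\<^sub>R k + (s' / (s + s')) *\<^sub>R k'"
          have "k'' \<in> K" unfolding k''_def
            using cK A B pos by (intro convexD) (auto simp: add_divide_distrib[symmetric])
          moreover have "a + b = (s + s') *\<^sub>R (k'' - z)"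
          proof -
            have e1: "(s + s') *\<^sub>R k'' = s *\<^sub>R k + s' *\<^sub>R k'" unfolding k''_def using pos
              by (simp add: scaleR_add_right)
            have "a + b = (s *\<^sub>R k + s' *\<^sub>R k') - (s + s') *\<^sub>R z" by (simp add: A B algebra_simps)
            thus ?thesis by (simp add: e1[symmetric] scaleR_diff_right)
          qed
          ultimately show ?thesis unfolding Cone_def using pos
            by (intro insertI2 CollectI exI[of _ "s + s'"] exI[of _ k'']) simp
        qed
      qed
    qed
  qed
  have inf_ge: "e \<le> p x" if "\<And>a. a \<in> Cone \<Longrightarrow> e \<le> dist x a" for e x
    unfolding p_def infdist_notempty[OF Cne] using Cne that by (intro cINF_greatest) auto
  have near: "\<exists>a\<in>Cone. dist x a < p x + e" if "e > 0" for x e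
  proof -
    have "bdd_below (dist x ` Cone)" by (rule bdd_belowI[of _ 0]) auto
    moreover have "(INF a\<in>Cone. dist x a) < p x + e" unfolding p_def infdist_notempty[OF Cne] using that by simp
    ultimately show ?thesis using cINF_less_iff[OF Cne, of "dist x" "p x + e"] by fast
  qed
  have sub: "p (x + y) \<le> p x + p y" for x y
  proof (rule field_le_epsilon)
    fix e :: real assume e: "e > 0"
    obtain a where a: "a \<in> Cone" "dist x a < p x + e/2" using near[of "e/2" x] e by auto
    obtain b where b: "b \<in> Cone" "dist y b < p y + e/2" using near[of "e/2" y] e by auto
    have "p (x + y) \<le> dist (x + y) (a + b)" unfolding p_def by (rule infdist_le[OF Cadd[OF a(1) b(1)]])
    also have "\<dots> \<le> dist x a + dist y b" unfolding dist_norm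
      by (metis add_diff_add norm_triangle_ineq)
    finally show "p (x + y) \<le> p x + p y + e" using a b by linarith
  qed
  have hom: "p (t *\<^sub>R x) = t * p x" if t: "t > 0" for t x
  proof (rule antisym)
    have "p (t *\<^sub>R x) / t \<le> p x"
    proof (rule inf_ge)
      fix a assume a: "a \<in> Cone"
      have "p (t *\<^sub>R x) \<le> dist (t *\<^sub>R x) (t *\<^sub>R a)" unfolding p_def
        by (rule infdist_le[OF Csc[OF a]]) (use t in simp)
      also have "\<dots> = t * dist x a" using t by (simp add: dist_norm scaleR_diff_right[symmetric])
      finally show "p (t *\<^sub>R x) / t \<le> dist x a" using t by (simp add: divide_le_eq mult.commute)
    qed
    thus "p (t *\<^sub>R x) \<le> t * p x" using t by (simp add: divide_le_eq mult.commute)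
  next
    have "t * p x \<le> p (t *\<^sub>R x)"
    proof (rule inf_ge)
      fix b assume b: "b \<in> Cone"
      have "p x \<le> dist x (inverse t *\<^sub>R b)" unfolding p_def
        by (rule infdist_le[OF Csc[OF b]]) (use t in simp)
      also have "dist x (inverse t *\<^sub>R b) = inverse t * dist (t *\<^sub>R x) b"
      proof -
        have "x - inverse t *\<^sub>R b = inverse t *\<^sub>R (t *\<^sub>R x - b)" using t by (simp add: algebra_simps)
        thus ?thesis using t by (simp add: dist_norm)
      qed
      finally show "t * p x \<le> dist (t *\<^sub>R x) b" using t by (simp add: field_simps)
    qed
    thus "t * p x \<le> p (t *\<^sub>R x)" .
  qed
  have ple: "p x \<le> norm x" for x unfolding p_def using infdist_le[OF C0, of x] by simp
  have pK: "p (k - z) = 0" if "k \<in> K" for k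
  proof -
    have "k - z \<in> Cone" unfolding Cone_def using that by (intro insertI2 CollectI exI[of _ 1] exI[of _ k]) simp
    thus ?thesis unfolding p_def by simp
  qed
  obtain x0 where x0: "p x0 > 0"
  proof (cases "K = {}")
    case True
    obtain v :: 'a where "v \<noteq> 0" using nontriv by blast
    have "Cone = {0}" unfolding Cone_def using True by auto
    hence "p v = norm v" unfolding p_def by simp
    thus ?thesis using \<open>v\<noteq>0\<close> that[of v] by simp
  next
    case False
    then obtain k0 where k0: "k0 \<in> K" by blast
    have "r \<le> p (z - k0)"
    proof (rule inf_ge)
      fix a assume "a \<in> Cone"
      then consider "a = 0" | s k where "a = s *\<^sub>R (k - z)" "s \<ge> 0" "k \<in> K" using Cone_def by blast
      thus "r \<le> dist (z - k0) a"
      proof cases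
        case 1 thus ?thesis using rK[OF k0] by (simp add: dist_norm)
      next
        case 2
        define k'' where "k'' = (1 / (1 + s)) *\<^sub>R k0 + (s / (1 + s)) *\<^sub>R k"
        have "k'' \<in> K" unfolding k''_def
          using cK 2 k0 by (intro convexD) (auto simp: add_divide_distrib[symmetric])
        hence "r \<le> dist z k''" by (rule rK)
        also have "\<dots> \<le> (1 + s) * dist z k''" using 2 by (simp add: mult_le_cancel_right1)
        also have "(1 + s) * dist z k'' = dist (z - k0) a"
        proof -
          have "(1 + s) *\<^sub>R (z - k'') = (z - k0) - a"
          proof -
            have e1: "(1 + s) *\<^sub>R k'' = k0 + s *\<^sub>R k" unfolding k''_def using 2
              by (simp add: scaleR_add_right)
            have "(1 + s) *\<^sub>R (z - k'') = (1 + s) *\<^sub>R z - (k0 + s *\<^sub>R k)"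
              by (simp add: scaleR_diff_right e1)
            thus ?thesis unfolding 2 by (simp add: algebra_simps)
          qed
          hence "norm ((1 + s) *\<^sub>R (z - k'')) = norm ((z - k0) - a)" by simp
          thus ?thesis using 2 by (simp add: dist_norm)
        qed
        finally show ?thesis .
      qed
    qed
    thus ?thesis using that[of "z - k0"] r by linarith
  qed
  obtain f where f: "linear f" "\<forall>x. f x \<le> p x" "f x0 = p x0"
    using hahn_banach_sublinear[of p x0] sub hom by blast
  have fb: "norm (f x) \<le> norm x * 1" for x
  proof -
    have "f x \<le> norm x" using f(2) ple order_trans by blast
    moreover have "- f x \<le> norm x" using f(2)[rule_format, of "-x"] ple[of "-x"] linear_neg[OF f(1)] by simp
    ultimately show ?thesis by simp
  qed
  have blf: "bounded_linear f" using f(1) fb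
    by (intro bounded_linear_intro[of f 1]) (auto simp: linear_add linear_scale)
  have "onorm f > 0" using onorm_pos_lt[OF blf] f(3) x0 by force
  define g where "g x = inverse (onorm f) *\<^sub>R f x" for x
  have blg: "bounded_linear g" unfolding g_def using bounded_linear_compose[OF bounded_linear_scaleR_right blf] by (simp add: o_def)
  have "onorm g = 1" unfolding g_def using onorm_scaleR[OF blf] \<open>onorm f > 0\<close> by simp
  moreover have "g k \<le> g z" if "k \<in> K" for k
  proof -
    have "f (k - z) \<le> 0" using f(2) pK[OF that] by metis
    hence "f k \<le> f z" using linear_diff[OF f(1)] by simp
    thus ?thesis unfolding g_def using \<open>onorm f > 0\<close> by (simp add: mult_left_mono)
  qed
  ultimately have "bounded_linear g \<and> onorm g = 1 \<and> (\<forall>k\<in>K. g k \<le> g z)" using blg by blast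
  then show ?thesis by blast
qed

lemma rch_base: "a \<in> A \<Longrightarrow> a \<in> rat_convex_hull A"
  unfolding rat_convex_hull_def
  by (intro CollectI exI[of _ "{0::nat}"] exI[of _ "\<lambda>_. 1::real"] exI[of _ "\<lambda>_. a"]) simp

lemma rch_comb:
  assumes u: "u \<in> rat_convex_hull A" and w: "w \<in> rat_convex_hull A"
    and q: "q \<in> \<rat>" "0 \<le> q" "q \<le> 1"
  shows "q *\<^sub>R u + (1 - q) *\<^sub>R w \<in> rat_convex_hull A"
proof -
  obtain I :: "nat set" and c x where I: "finite I" "\<forall>i\<in>I. c i \<in> \<rat> \<and> c i \<ge> 0 \<and> x i \<in> A" "sum c I = 1"
    "u = (\<Sum>i\<in>I. c i *\<^sub>R x i)" using u unfolding rat_convex_hull_def by blast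
  obtain J :: "nat set" and d y where J: "finite J" "\<forall>i\<in>J. d i \<in> \<rat> \<and> d i \<ge> 0 \<and> y i \<in> A" "sum d J = 1"
    "w = (\<Sum>i\<in>J. d i *\<^sub>R y i)" using w unfolding rat_convex_hull_def by blast
  define I' where "I' = (\<lambda>i. 2*i) ` I \<union> (\<lambda>i. 2*i+1) ` J"
  define c' where "c' i = (if even i then q * c (i div 2) else (1 - q) * d (i div 2))" for i :: nat
  define x' where "x' i = (if even i then x (i div 2) else y (i div 2))" for i :: nat
  have ne: "2*i \<noteq> 2*j+1" for i j :: nat by presburger
  have disj: "(\<lambda>i. 2*i) ` I \<inter> (\<lambda>i. 2*i+1) ` J = {}" using ne by blast
  have inj1: "inj_on (\<lambda>i::nat. 2*i) I" by (auto simp: inj_on_def)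
  have inj2: "inj_on (\<lambda>i::nat. 2*i+1) J" by (auto simp: inj_on_def)
  have sumeq: "sum h I' = (\<Sum>i\<in>I. h (2*i)) + (\<Sum>i\<in>J. h (2*i+1))" for h :: "nat \<Rightarrow> 'b::comm_monoid_add"
  proof -
    have "sum h I' = sum h ((\<lambda>i. 2*i) ` I) + sum h ((\<lambda>i. 2*i+1) ` J)"
      unfolding I'_def by (rule sum.union_disjoint) (use I(1) J(1) disj in auto)
    also have "\<dots> = (\<Sum>i\<in>I. h (2*i)) + (\<Sum>i\<in>J. h (2*i+1))"
      by (simp only: sum.reindex[OF inj1] sum.reindex[OF inj2] o_def)
    finally show ?thesis .
  qed
  have F1: "finite I'" unfolding I'_def using I(1) J(1) by simp
  have F2: "\<forall>i\<in>I'. c' i \<in> \<rat> \<and> c' i \<ge> 0 \<and> x' i \<in> A"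
  proof
    fix i assume "i \<in> I'"
    then consider j where "j \<in> I" "i = 2*j" | j where "j \<in> J" "i = 2*j+1" unfolding I'_def by blast
    thus "c' i \<in> \<rat> \<and> c' i \<ge> 0 \<and> x' i \<in> A"
    proof cases
      case 1 thus ?thesis unfolding c'_def x'_def using I(2) q by simp
    next
      case 2 thus ?thesis unfolding c'_def x'_def using J(2) q by simp
    qed
  qed
  have F3: "sum c' I' = 1"
    unfolding sumeq c'_def using I(3) J(3) by (simp add: sum_distrib_left[symmetric])
  have F4: "q *\<^sub>R u + (1 - q) *\<^sub>R w = (\<Sum>i\<in>I'. c' i *\<^sub>R x' i)"
    unfolding sumeq c'_def x'_def I(4) J(4) by (simp add: scaleR_sum_right)
  show ?thesis unfolding rat_convex_hull_def
    by (rule CollectI, rule exI[of _ I'], rule exI[of _ c'], rule exI[of _ x']) (use F1 F2 F3 F4 in blast)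
qed

lemma rat_approx_seq:
  fixes u :: real assumes "0 \<le> u" "u \<le> 1"
  shows "\<exists>q. (\<forall>n. q n \<in> \<rat> \<and> 0 \<le> q n \<and> q n \<le> 1) \<and> q \<longlonglongrightarrow> u"
proof -
  define q where "q n = of_int \<lfloor>u * real (Suc n)\<rfloor> / real (Suc n)" for n
  have "q n \<in> \<rat>" for n unfolding q_def by simp
  moreover have "0 \<le> q n" for n unfolding q_def using assms by simp
  moreover have "q n \<le> 1" for n
  proof -
    have "of_int \<lfloor>u * real (Suc n)\<rfloor> \<le> u * real (Suc n)" by simp
    also have "\<dots> \<le> real (Suc n)" using assms by (simp add: mult_le_cancel_right1)
    finally show ?thesis unfolding q_def by simp
  qed
  moreover have "q \<longlonglongrightarrow> u"
  proof -
    have b: "norm (q n - u) \<le> inverse (real (Suc n))" for n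
    proof -
      have f1: "of_int \<lfloor>u * real (Suc n)\<rfloor> \<le> u * real (Suc n)" by simp
      have f2: "u * real (Suc n) - 1 < of_int \<lfloor>u * real (Suc n)\<rfloor>" by linarith
      have "q n - u = (of_int \<lfloor>u * real (Suc n)\<rfloor> - u * real (Suc n)) / real (Suc n)"
        unfolding q_def by (simp add: field_simps)
      hence "\<bar>q n - u\<bar> = \<bar>of_int \<lfloor>u * real (Suc n)\<rfloor> - u * real (Suc n)\<bar> / real (Suc n)" by simp
      also have "\<dots> \<le> 1 / real (Suc n)"
      proof (rule divide_right_mono)
        show "\<bar>of_int \<lfloor>u * real (Suc n)\<rfloor> - u * real (Suc n)\<bar> \<le> 1"
          using f1 f2 by (simp only: abs_le_iff) linarith
      qed simp
      finally show ?thesis by (simp add: divide_inverse)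
    qed
    have "(\<lambda>n. q n - u) \<longlonglongrightarrow> 0"
      by (rule Lim_null_comparison[OF always_eventually[OF allI[OF b]] LIMSEQ_inverse_real_of_nat])
    thus ?thesis by (simp add: LIM_zero_iff)
  qed
  ultimately show ?thesis by blast
qed

lemma convex_closure_rch: "convex (closure (rat_convex_hull (A::'a::real_normed_vector set)))"
proof (rule convexI)
  fix a b :: 'a and u v :: real
  assume a: "a \<in> closure (rat_convex_hull A)" and b: "b \<in> closure (rat_convex_hull A)"
    and uv: "0 \<le> u" "0 \<le> v" "u + v = 1"
  obtain \<alpha> where \<alpha>: "\<forall>n. \<alpha> n \<in> rat_convex_hull A" "\<alpha> \<longlonglongrightarrow> a" using a unfolding closure_sequential by blast
  obtain \<beta> where \<beta>: "\<forall>n. \<beta> n \<in> rat_convex_hull A" "\<beta> \<longlonglongrightarrow> b" using b unfolding closure_sequential by blast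
  obtain q where q: "\<forall>n. q n \<in> \<rat> \<and> 0 \<le> q n \<and> q n \<le> 1" "q \<longlonglongrightarrow> u"
    using rat_approx_seq[of u] uv by force
  have "\<forall>n. q n *\<^sub>R \<alpha> n + (1 - q n) *\<^sub>R \<beta> n \<in> rat_convex_hull A"
  proof
    fix n show "q n *\<^sub>R \<alpha> n + (1 - q n) *\<^sub>R \<beta> n \<in> rat_convex_hull A"
      using q(1) \<alpha>(1) \<beta>(1) by (intro rch_comb) auto
  qed
  moreover have "(\<lambda>n. q n *\<^sub>R \<alpha> n + (1 - q n) *\<^sub>R \<beta> n) \<longlonglongrightarrow> u *\<^sub>R a + (1 - u) *\<^sub>R b"
    by (intro tendsto_intros q(2) \<alpha>(2) \<beta>(2))
  ultimately have "u *\<^sub>R a + (1 - u) *\<^sub>R b \<in> closure (rat_convex_hull A)"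
    unfolding closure_sequential by (intro exI[of _ "\<lambda>n. q n *\<^sub>R \<alpha> n + (1 - q n) *\<^sub>R \<beta> n"] conjI)
  moreover have "v = 1 - u" using uv by simp
  ultimately show "u *\<^sub>R a + v *\<^sub>R b \<in> closure (rat_convex_hull A)" by simp
qed

lemma rch_functional:
  assumes "w \<in> rat_convex_hull A" "linear (f :: 'a::real_vector \<Rightarrow> real)" "f w > c"
  shows "\<exists>a\<in>A. f a > c"
proof (rule ccontr)
  assume "\<not> (\<exists>a\<in>A. f a > c)"
  hence le: "\<forall>a\<in>A. f a \<le> c" by (simp add: not_less)
  obtain I :: "nat set" and cc x where I: "finite I" "\<forall>i\<in>I. cc i \<in> \<rat> \<and> cc i \<ge> 0 \<and> x i \<in> A" "sum cc I = 1"
    "w = (\<Sum>i\<in>I. cc i *\<^sub>R x i)" using assms(1) unfolding rat_convex_hull_def by blast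
  have "f w = (\<Sum>i\<in>I. cc i * f (x i))" unfolding I(4)
    using linear_sum[OF assms(2), of "\<lambda>i. cc i *\<^sub>R x i" I] linear_scale[OF assms(2)] by simp
  also have "\<dots> \<le> (\<Sum>i\<in>I. cc i * c)" using I(2) le by (intro sum_mono mult_left_mono) auto
  also have "\<dots> = c" using I(3) by (simp add: sum_distrib_right[symmetric])
  finally show False using assms(3) by simp
qed

lemma approx_D:
  fixes D :: "'a::real_normed_vector set" and g :: "'a \<Rightarrow> real"
  assumes dense: "closure D = UNIV" and g: "bounded_linear g" and x: "norm x \<le> 1" "g x > c" and e: "e > 0"
  shows "\<exists>x'\<in>D. norm x' < 1 \<and> g x' > c \<and> dist x' x < e"
proof -
  define Op where "Op = ball x e \<inter> {y. c < g y}"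
  have cg: "continuous_on UNIV g" by (rule linear_continuous_on[OF g])
  have "open {y. c < g y}" by (rule open_Collect_less) (simp_all add: cg)
  hence oO: "open Op" unfolding Op_def by (intro open_Int open_ball)
  have xO: "x \<in> Op" unfolding Op_def using x e by simp
  have "x \<in> closure (ball 0 1)" using x by (simp add: closure_ball)
  hence "Op \<inter> closure (ball 0 1) \<noteq> {}" using xO by blast
  hence ne: "Op \<inter> ball 0 1 \<noteq> {}" using open_Int_closure_eq_empty[OF oO] by blast
  have "open (Op \<inter> ball 0 1)" using oO by (intro open_Int open_ball)
  hence "(Op \<inter> ball 0 1) \<inter> D \<noteq> {}" using open_Int_closure_eq_empty[of "Op \<inter> ball 0 1" D] ne dense by simp
  then obtain x' where "x' \<in> Op" "x' \<in> ball 0 1" "x' \<in> D" by blast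
  thus ?thesis unfolding Op_def by (auto simp: dist_commute)
qed

lemma onorm_approx:
  fixes f :: "'a::real_normed_vector \<Rightarrow> real"
  assumes f: "bounded_linear f" "onorm f = 1" and e: "e > 0"
  shows "\<exists>x. norm x \<le> 1 \<and> f x > 1 - e"
proof -
  have bdd: "bdd_above (range (\<lambda>x. norm (f x) / norm x))"
    using le_onorm[OF f(1)] by (intro bdd_aboveI2[where M="onorm f"]) simp
  have "1 - e < (SUP x. norm (f x) / norm x)" using f(2) e unfolding onorm_def by simp
  then obtain x where x: "1 - e < norm (f x) / norm x" using less_cSUP_iff[OF _ bdd] by blast
  show ?thesis
  proof (cases "x = 0")
    case True thus ?thesis using x linear_0[OF bounded_linear.linear[OF f(1)]] by (intro exI[of _ 0]) simp
  next
    case False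
    define u where "u = x /\<^sub>R norm x"
    have nu: "norm u = 1" unfolding u_def using False by simp
    have fu: "f u = f x / norm x" unfolding u_def using linear_scale[OF bounded_linear.linear[OF f(1)]]
      by (simp add: divide_inverse mult.commute)
    hence "1 - e < \<bar>f u\<bar>" using x by simp
    hence "1 - e < f u \<or> 1 - e < f (- u)" using linear_neg[OF bounded_linear.linear[OF f(1)]] by (cases "f u \<ge> 0") auto
    thus ?thesis using nu by (metis norm_minus_cancel order_refl)
  qed
qed

lemma onorm_le1:
  assumes "bounded_linear f" "onorm f = 1" "norm x \<le> 1"
  shows "(f x :: real) \<le> 1"
proof -
  have "\<bar>f x\<bar> \<le> onorm f * norm x" using onorm[OF assms(1)] by simp
  thus ?thesis using assms by simp
qed

theorem lemma5p2:
  fixes \<delta> :: real and D :: "'a::banach set"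
  assumes nontriv: "\<exists>v::'a. v \<noteq> 0"
    and "0 < \<delta>" and "\<delta> \<le> 2"
    and dense: "closure D = UNIV"
  shows "LDP \<delta> TYPE('a) \<longleftrightarrow>
    (\<forall>\<epsilon>>0. \<forall>z\<in>D. norm z \<ge> 1 \<or>
       z \<in> closed_rat_convex_hull
             {(x + y) /\<^sub>R 2 | x y. x \<in> ball 0 1 \<inter> D \<and> y \<in> ball 0 1 \<inter> D \<and> norm (x - y) > \<delta> - \<epsilon>})"
  (is "?L \<longleftrightarrow> (\<forall>\<epsilon>>0. \<forall>z\<in>D. norm z \<ge> 1 \<or> z \<in> closed_rat_convex_hull (?M \<epsilon>))")
proof
  assume L: ?L
  show "\<forall>\<epsilon>>0. \<forall>z\<in>D. norm z \<ge> 1 \<or> z \<in> closed_rat_convex_hull (?M \<epsilon>)"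
  proof (intro allI impI ballI)
    fix \<epsilon> :: real and z assume \<epsilon>: "\<epsilon> > 0" and zD: "z \<in> D"
    show "norm z \<ge> 1 \<or> z \<in> closed_rat_convex_hull (?M \<epsilon>)"
    proof (rule ccontr)
      assume "\<not> (norm z \<ge> 1 \<or> z \<in> closed_rat_convex_hull (?M \<epsilon>))"
      hence nz: "norm z < 1" and zn: "z \<notin> closure (rat_convex_hull (?M \<epsilon>))"
        unfolding closed_rat_convex_hull_def by auto
      have zn': "z \<notin> closure (closure (rat_convex_hull (?M \<epsilon>)))" using zn by (simp add: closure_closure)
      obtain g :: "'a \<Rightarrow> real" where g: "bounded_linear g" "onorm g = 1"
        and gK: "\<forall>k\<in>closure (rat_convex_hull (?M \<epsilon>)). g k \<le> g z"
        using separation_point[OF nontriv convex_closure_rch zn'] by auto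
      define c where "c = g z"
      have c1: "c < 1"
      proof -
        have "\<bar>g z\<bar> \<le> onorm g * norm z" using onorm[OF g(1)] by simp
        thus ?thesis using nz g(2) c_def by simp
      qed
      have "\<delta> \<le> diameter (slice g (1 - c))" using L[unfolded LDP_def, rule_format, of g "1 - c"] g c1 by simp
      define S where "S = slice g (1 - c)"
      have Sdef: "S = {x. norm x \<le> 1 \<and> g x > c}" unfolding S_def slice_def by simp
      have bS: "bounded S" unfolding Sdef by (rule bounded_subset[OF bounded_cball[of 0 1]]) auto
      define d where "d = max (\<delta> - \<epsilon>/2) (\<delta>/2)"
      have "0 < d" "d < diameter S" using \<open>\<delta> \<le> diameter _\<close> \<open>0 < \<delta>\<close> \<epsilon> unfolding d_def S_def by auto
      then obtain x y where xy: "x \<in> S" "y \<in> S" "d < dist x y" using diameter_lower_bounded[OF bS] by blast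
      have xS: "norm x \<le> 1" "g x > c" using xy(1) unfolding Sdef by auto
      have yS: "norm y \<le> 1" "g y > c" using xy(2) unfolding Sdef by auto
      have e4: "\<epsilon>/4 > 0" using \<epsilon> by simp
      obtain x' where x': "x' \<in> D" "norm x' < 1" "g x' > c" "dist x' x < \<epsilon>/4"
        using approx_D[OF dense g(1) xS e4] by blast
      obtain y' where y': "y' \<in> D" "norm y' < 1" "g y' > c" "dist y' y < \<epsilon>/4"
        using approx_D[OF dense g(1) yS e4] by blast
      have t1: "dist x y \<le> dist x x' + dist x' y" by (rule dist_triangle)
      have t2: "dist x' y \<le> dist x' y' + dist y' y" by (rule dist_triangle)
      have t3: "dist x x' = dist x' x" by (rule dist_commute)
      have "dist x y \<le> dist x' x + dist x' y' + dist y' y" using t1 t2 t3 by linarith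
      hence "norm (x' - y') > \<delta> - \<epsilon>" using xy(3) x'(4) y'(4) unfolding d_def dist_norm by linarith
      hence "(x' + y') /\<^sub>R 2 \<in> ?M \<epsilon>" using x' y'
        by (intro CollectI exI[of _ x'] exI[of _ y']) simp
      hence "(x' + y') /\<^sub>R 2 \<in> closure (rat_convex_hull (?M \<epsilon>))"
        by (rule subsetD[OF closure_subset rch_base])
      hence "g ((x' + y') /\<^sub>R 2) \<le> c" using gK c_def by blast
      moreover have "g ((x' + y') /\<^sub>R 2) = (g x' + g y') / 2"
        using linear_scale[OF bounded_linear.linear[OF g(1)]] linear_add[OF bounded_linear.linear[OF g(1)]]
        by simp
      ultimately show False using x'(3) y'(3) by simp
    qed
  qed
next
  assume R: "\<forall>\<epsilon>>0. \<forall>z\<in>D. norm z \<ge> 1 \<or> z \<in> closed_rat_convex_hull (?M \<epsilon>)"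
  show ?L unfolding LDP_def
  proof (intro allI impI, elim conjE)
    fix f :: "'a \<Rightarrow> real" and \<alpha> :: real
    assume f: "bounded_linear f" "onorm f = 1" and \<alpha>: "\<alpha> > 0"
    have bS: "bounded (slice f \<alpha>)" unfolding slice_def by (rule bounded_subset[OF bounded_cball[of 0 1]]) auto
    obtain u where u: "norm u \<le> 1" "f u > 1 - \<alpha>/2" using onorm_approx[OF f, of "\<alpha>/2"] \<alpha> by auto
    obtain z where z: "z \<in> D" "norm z < 1" "f z > 1 - \<alpha>/2"
      using approx_D[OF dense f(1) u, of 1] by auto
    have "\<delta> - \<epsilon> < diameter (slice f \<alpha>)" if \<epsilon>: "\<epsilon> > 0" for \<epsilon>
    proof -
      have "z \<in> closure (rat_convex_hull (?M \<epsilon>))" using R[rule_format, OF \<epsilon> z(1)] z(2) unfolding closed_rat_convex_hull_def by simp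
      moreover have cf: "continuous_on UNIV f" by (rule linear_continuous_on[OF f(1)])
      moreover have oV: "open {y. 1 - \<alpha>/2 < f y}" by (rule open_Collect_less) (simp_all add: cf)
      ultimately have "{y. 1 - \<alpha>/2 < f y} \<inter> closure (rat_convex_hull (?M \<epsilon>)) \<noteq> {}" using z by blast
      hence "{y. 1 - \<alpha>/2 < f y} \<inter> rat_convex_hull (?M \<epsilon>) \<noteq> {}" using open_Int_closure_eq_empty[OF oV] by blast
      then obtain w where "w \<in> rat_convex_hull (?M \<epsilon>)" "f w > 1 - \<alpha>/2" by auto
      then obtain m where m: "m \<in> ?M \<epsilon>" "f m > 1 - \<alpha>/2"
        using rch_functional[OF _ bounded_linear.linear[OF f(1)]] by blast
      then obtain x y where xy: "m = (x + y) /\<^sub>R 2" "x \<in> ball 0 1 \<inter> D" "y \<in> ball 0 1 \<inter> D" "norm (x - y) > \<delta> - \<epsilon>"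
        by blast
      have nx: "norm x \<le> 1" "norm y \<le> 1" using xy by auto
      have fm: "f m = (f x + f y) / 2" unfolding xy(1)
        using linear_scale[OF bounded_linear.linear[OF f(1)]] linear_add[OF bounded_linear.linear[OF f(1)]]
        by simp
      have "f x \<le> 1" "f y \<le> 1" using onorm_le1[OF f] nx by auto
      moreover have "f x + f y > 2 - \<alpha>" using m(2) unfolding fm by (simp add: field_simps)
      ultimately have fx: "f x > 1 - \<alpha>" and fy: "f y > 1 - \<alpha>" by linarith+
      have "x \<in> slice f \<alpha>" "y \<in> slice f \<alpha>" using nx fx fy unfolding slice_def by auto
      hence "dist x y \<le> diameter (slice f \<alpha>)" using diameter_bounded_bound[OF bS] by blast
      thus ?thesis using xy(4) by (simp add: dist_norm)
    qed
    show "\<delta> \<le> diameter (slice f \<alpha>)"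
    proof (rule ccontr)
      assume "\<not> \<delta> \<le> diameter (slice f \<alpha>)"
      hence "\<delta> - diameter (slice f \<alpha>) > 0" by simp
      from \<open>\<And>\<epsilon>. \<epsilon> > 0 \<Longrightarrow> _\<close>[OF this] show False by simp
    qed
  qed
qed

end
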